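(* Let $(A,[\cdot,\cdot])$ be an Acaa-algebra over a field $\mathbb K$ of characteristic $0$. For every $X\in A$, the linear map $\mathrm{ad}\,X:A\to A$, $Y\mapsto[X,Y]$, is a weighted anti-derivation of weight $2$, i.e. $2\,\mathrm{ad}\,X([Y,Z])=-[Y,\mathrm{ad}\,X(Z)]-[\mathrm{ad}\,X(Y),Z]$ for all $Y,Z\in A$.
   Context: An Acaa-algebra over a field $\mathbb K$ of characteristic $0$ is a $\mathbb K$-vector space $A$ with a bilinear product $[\cdot,\cdot]$ which is anticommutative, $[x,y]=-[y,x]$, and satisfies $[x_1,[x_2,x_3]]=[x_2,[x_3,x_1]]$ for all $x_1,x_2,x_3\in A$. For an algebra $B$ and $k\in\mathbb N^*$, a linear map $f\in\mathrm{End}(B)$ is a weighted anti-derivation of weight $k$ if $k f(xy)=-x f(y)-f(x)y$ for all $x,y\in B$. *)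

theory Defs
  imports Complex_Main
begin

definition bilinear_prod :: "('k::field \<Rightarrow> 'a::ab_group_add \<Rightarrow> 'a) \<Rightarrow> ('a \<Rightarrow> 'a \<Rightarrow> 'a) \<Rightarrow> bool" where
  "bilinear_prod scale br \<longleftrightarrow>
     (\<forall>x y z. br (x + y) z = br x z + br y z) \<and>
     (\<forall>x y z. br x (y + z) = br x y + br x z) \<and>
     (\<forall>c x y. br (scale c x) y = scale c (br x y)) \<and>
     (\<forall>c x y. br x (scale c y) = scale c (br x y))"

definition acaa_algebra :: "('k::field \<Rightarrow> 'a::ab_group_add \<Rightarrow> 'a) \<Rightarrow> ('a \<Rightarrow> 'a \<Rightarrow> 'a) \<Rightarrow> bool" where
  "acaa_algebra scale br \<longleftrightarrow>
     vector_space scale \<and> bilinear_prod scale br \<and>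
     (\<forall>x y. br x y = - br y x) \<and>
     (\<forall>x1 x2 x3. br x1 (br x2 x3) = br x2 (br x3 x1))"

definition weighted_anti_derivation ::
  "('k::field \<Rightarrow> 'a::ab_group_add \<Rightarrow> 'a) \<Rightarrow> ('a \<Rightarrow> 'a \<Rightarrow> 'a) \<Rightarrow> nat \<Rightarrow> ('a \<Rightarrow> 'a) \<Rightarrow> bool" where
  "weighted_anti_derivation scale br k f \<longleftrightarrow>
     k \<ge> 1 \<and> Vector_Spaces.linear scale scale f \<and>
     (\<forall>x y. scale (of_nat k) (f (br x y)) = - br x (f y) - br (f x) y)"

definition ad :: "('a \<Rightarrow> 'a \<Rightarrow> 'a) \<Rightarrow> 'a \<Rightarrow> 'a \<Rightarrow> 'a" where
  "ad br x = (\<lambda>y. br x y)"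

end

theory Submission
  imports Defs
begin

theorem mainTheorem8:
  fixes scale :: "'k::field_char_0 \<Rightarrow> 'a::ab_group_add \<Rightarrow> 'a"
    and br :: "'a \<Rightarrow> 'a \<Rightarrow> 'a"
  assumes "acaa_algebra scale br"
  shows "\<forall>X. weighted_anti_derivation scale br 2 (ad br X)"
proof
  fix X
  have vs: "vector_space scale" and bl: "bilinear_prod scale br"
    and ac: "\<And>x y. br x y = - br y x"
    and cy: "\<And>x1 x2 x3. br x1 (br x2 x3) = br x2 (br x3 x1)"
    using assms unfolding acaa_algebra_def by blast+
  interpret vector_space scale by (rule vs)
  have two: "\<And>v. scale 2 v = v + v"
  proof -
    fix v
    have "scale (1+1) v = scale 1 v + scale 1 v" by (rule scale_left_distrib)
    then show "scale 2 v = v + v" by simp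
  qed
  have lin: "Vector_Spaces.linear scale scale (ad br X)"
    unfolding Vector_Spaces.linear_def module_hom_def module_hom_axioms_def ad_def
    using bl vs unfolding bilinear_prod_def vector_space_def module_def by blast
  have eq: "scale (of_nat 2) (ad br X (br x y)) = - br x (ad br X y) - br (ad br X x) y" for x y
  proof -
    have addr: "\<And>u v. br X (u + v) = br X u + br X v" using bl unfolding bilinear_prod_def by blast
    have neg: "br X (- w) = - br X w" for w
    proof -
      have "br X (- w) + br X w = br X (- w + w)" by (rule addr[symmetric])
      also have "\<dots> = br X 0" by (simp only: left_minus)
      also have "br X 0 = 0" using addr[of 0 0] by simp
      finally show ?thesis by (simp add: eq_neg_iff_add_eq_0)
    qed
    have a: "- br x (br X y) = br X (br x y)"
      using cy[of x X y] ac[of y x] neg[of "br x y"] by simp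
    have b: "- br (br X x) y = br X (br x y)"
      using ac[of "br X x" y] cy[of y X x] by simp
    have "scale (of_nat 2) (br X (br x y)) = br X (br x y) + br X (br x y)" using two by simp
    then show ?thesis unfolding ad_def using a b by (simp only: diff_conv_add_uminus)
  qed
  show "weighted_anti_derivation scale br 2 (ad br X)"
    unfolding weighted_anti_derivation_def using lin eq by simp
qed

end
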